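(* Let $m\ge1$ and $\beta\in\mathbb R$. For $0\le s\le m$ set $\varepsilon_j=-1$ for $1\le j\le s$ and $\varepsilon_j=+1$ for $s<j\le m$, and $$F_s(m)=\frac{2^{m^2-m}}{\pi^m\,s!\,(m-s)!}\int_{[0,\pi/2]^m}dp_1\cdots dp_m\prod_{1\le k<j\le m}\sin^2(\varepsilon_jp_j-\varepsilon_kp_k).$$ Then $$\sum_{s=0}^m e^{s\beta}F_s(m)=\det_m T(\beta),\qquad T_{kn}(\beta)=\delta_{kn}\frac{e^\beta+1}{2}+(1-\delta_{kn})(1-e^\beta)\frac{1-(-1)^{n-k}}{2i\pi(n-k)},\quad 1\le k,n\le m.$$
   Context: This is the homogeneous free-fermion ($\zeta=\pi/2$) case of the generating function $\mathcal Q_m(\beta)=\langle\psi_g|\exp(\beta\sum_{j=1}^m\frac12(1-\sigma^z_j))|\psi_g\rangle$ of the XX chain; the claim is the stated integral/determinant identity. *)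

theory Defs
  imports "HOL-Analysis.Analysis" "Jordan_Normal_Form.Determinant"
begin

text \<open>Signs: indices are 0-based, j in {0..<m}; eps s j = -1 for j < s, +1 otherwise.\<close>
definition eps :: "nat \<Rightarrow> nat \<Rightarrow> real" where
  "eps s j = (if j < s then -1 else 1)"

definition F :: "nat \<Rightarrow> nat \<Rightarrow> real" where
  "F m s = 2 powr (real (m^2) - real m) / (pi ^ m * fact s * fact (m - s)) *
     (\<integral>p. indicator (PiE {..<m} (\<lambda>_. {0..pi/2})) p *
        (\<Prod>j\<in>{..<m}. \<Prod>k\<in>{..<j}. (sin (eps s j * p j - eps s k * p k))^2)
      \<partial>(PiM {..<m} (\<lambda>_. lborel)))"

definition Tmat :: "nat \<Rightarrow> real \<Rightarrow> complex mat" where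
  "Tmat m \<beta> = Matrix.mat m m (\<lambda>(k, n).
     if k = n then complex_of_real ((exp \<beta> + 1) / 2)
     else complex_of_real ((1 - exp \<beta>) * (1 - (-1) powi (int n - int k)))
          / (2 * \<i> * pi * of_int (int n - int k)))"

end

theory Submission
  imports Defs
begin


definition vdm :: "nat \<Rightarrow> (nat \<Rightarrow> 'a::comm_ring_1) \<Rightarrow> 'a mat" where
  "vdm n x = Matrix.mat n n (\<lambda>(i,j). x i ^ j)"

lemma vdm_carrier[simp]: "vdm n x \<in> carrier_mat n n"
  by (simp add: vdm_def)

lemma vdm_det: "Determinant.det (vdm n x) = (\<Prod>j<n. \<Prod>i<j. x j - x i)"
proof (induction n arbitrary: x)
  case 0
  show ?case by (simp add: vdm_def)
next
  case (Suc n)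
  define U :: "'a mat" where "U = Matrix.mat (Suc n) (Suc n) (\<lambda>(i,j). if i = j then 1 else if Suc i = j then - x 0 else 0)"
  have Uc: "U \<in> carrier_mat (Suc n) (Suc n)" by (simp add: U_def)
  have "upper_triangular U" unfolding U_def upper_triangular_def by auto
  hence "Determinant.det U = prod_list (diag_mat U)" using det_upper_triangular[OF _ Uc] by blast
  also have "diag_mat U = map (\<lambda>i. 1) [0..<Suc n]" by (simp add: U_def diag_mat_def)
  finally have dU: "Determinant.det U = 1" by (simp add: map_replicate_const)
  define W where "W = vdm (Suc n) x * U"
  have Wc: "W \<in> carrier_mat (Suc n) (Suc n)" unfolding W_def by (rule mult_carrier_mat[OF vdm_carrier Uc])
  have dW: "Determinant.det W = Determinant.det (vdm (Suc n) x)"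
    unfolding W_def using det_mult[OF vdm_carrier Uc] dU by simp
  have Wij: "W $$ (i,j) = (if j = 0 then 1 else x i ^ j - x 0 * x i ^ (j - 1))"
    if "i < Suc n" "j < Suc n" for i j
  proof -
    have "W $$ (i,j) = (\<Sum>k\<in>{0..<Suc n}. x i ^ k * (if k = j then 1 else if Suc k = j then - x 0 else 0))"
      using that by (simp add: W_def U_def vdm_def scalar_prod_def)
    also have "\<dots> = (\<Sum>k\<in>{0..<Suc n}. (if k = j then x i ^ k else 0) + (if Suc k = j then - x 0 * x i ^ k else 0))"
      by (rule sum.cong) auto
    also have "\<dots> = x i ^ j + (\<Sum>k\<in>{0..<Suc n}. (if Suc k = j then - x 0 * x i ^ k else 0))"
      using that by (simp add: sum.distrib)
    also have "(\<Sum>k\<in>{0..<Suc n}. (if Suc k = j then - x 0 * x i ^ k else 0)) = (if j = 0 then 0 else - x 0 * x i ^ (j - 1))"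
    proof (cases j)
      case 0 then show ?thesis by simp
    next
      case (Suc j') 
      have "(\<Sum>k\<in>{0..<Suc n}. (if Suc k = j then - x 0 * x i ^ k else 0)) = (\<Sum>k\<in>{0..<Suc n}. (if k = j' then - x 0 * x i ^ k else 0))"
        using Suc by (intro sum.cong) auto
      then show ?thesis using Suc that by simp
    qed
    finally show ?thesis by simp
  qed
  have "Determinant.det W = (\<Sum>j<Suc n. W $$ (0,j) * cofactor W 0 j)"
    by (rule laplace_expansion_row[OF Wc]) simp
  also have "\<dots> = W $$ (0,0) * cofactor W 0 0"
  proof -
    have "(\<Sum>j<n. W $$ (0, Suc j) * cofactor W 0 (Suc j)) = 0"
      by (rule sum.neutral) (auto simp: Wij)
    then show ?thesis unfolding sum.lessThan_Suc_shift by simp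
  qed
  also have "\<dots> = Determinant.det (mat_delete W 0 0)"
    by (simp add: Wij cofactor_def)
  also have "mat_delete W 0 0 = mat\<^sub>r n n (\<lambda>i. (x (Suc i) - x 0) \<cdot>\<^sub>v row (vdm n (x \<circ> Suc)) i)"
    using Wc by (intro eq_matI) (auto simp: mat_delete_def Wij vdm_def algebra_simps power_eq_if)
  also have "Determinant.det \<dots> = (\<Prod>i\<in>{0..<n}. x (Suc i) - x 0) * Determinant.det (mat\<^sub>r n n (\<lambda>i. row (vdm n (x \<circ> Suc)) i))"
    by (rule det_rows_mul) (auto simp: vdm_def)
  also have "mat\<^sub>r n n (\<lambda>i. row (vdm n (x \<circ> Suc)) i) = vdm n (x \<circ> Suc)"
    by (intro eq_matI) (auto simp: vdm_def)
  also have "Determinant.det (vdm n (x \<circ> Suc)) = (\<Prod>j<n. \<Prod>i<j. x (Suc j) - x (Suc i))"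
    using Suc.IH[of "x \<circ> Suc"] by (simp add: comp_def)
  finally have 1: "Determinant.det (vdm (Suc n) x) = (\<Prod>i<n. x (Suc i) - x 0) * (\<Prod>j<n. \<Prod>i<j. x (Suc j) - x (Suc i))"
    using dW by (simp add: atLeast0LessThan)
  have "(\<Prod>j<Suc n. \<Prod>i<j. x j - x i) = (\<Prod>j<n. \<Prod>i<Suc j. x (Suc j) - x i)"
    unfolding prod.lessThan_Suc_shift by simp
  also have "\<dots> = (\<Prod>j<n. (x (Suc j) - x 0) * (\<Prod>i<j. x (Suc j) - x (Suc i)))"
    unfolding prod.lessThan_Suc_shift by simp
  also have "\<dots> = (\<Prod>i<n. x (Suc i) - x 0) * (\<Prod>j<n. \<Prod>i<j. x (Suc j) - x (Suc i))"
    by (simp add: prod.distrib)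
  finally show ?case using 1 by simp
qed

lemma vandermonde_leibniz:
  "(\<Prod>j<n. \<Prod>i<j. x j - x i) = (\<Sum>p\<in>{p. p permutes {..<n}}. of_int (sign p) * (\<Prod>i<n. (x i :: 'a::comm_ring_1) ^ p i))"
  unfolding vdm_det[symmetric] det_def'[OF vdm_carrier]
  by (intro sum.cong) (auto simp: atLeast0LessThan vdm_def intro!: prod.cong)



lemma sin_sq_exp:
  fixes a b :: real
  shows "(complex_of_real (sin (a - b)))^2 = (1/4) * ((exp (2 * \<i> * of_real a) - exp (2 * \<i> * of_real b)) * (exp (-2 * \<i> * of_real a) - exp (-2 * \<i> * of_real b)))"
proof -
  define u where "u = exp (2 * \<i> * of_real a)"
  define v where "v = exp (2 * \<i> * of_real b)"
  have u0: "u \<noteq> 0" and v0: "v \<noteq> 0" by (simp_all add: u_def v_def)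
  have eu: "exp (-2 * \<i> * of_real a) = inverse u" by (simp add: u_def flip: exp_minus)
  have ev: "exp (-2 * \<i> * of_real b) = inverse v" by (simp add: v_def flip: exp_minus)
  have uv: "u / v = exp (\<i> * of_real (2*(a-b)))" by (simp add: u_def v_def flip: exp_diff; simp add: algebra_simps)
  have vu: "v / u = exp (- (\<i> * of_real (2*(a-b))))" by (simp add: u_def v_def flip: exp_diff; simp add: algebra_simps)
  have e: "(u - v) * (inverse u - inverse v) = 2 - (u / v + v / u)"
    using u0 v0 by (simp add: field_simps; simp add: algebra_simps)
  have c: "exp (\<i> * of_real (2*(a-b))) + exp (- (\<i> * of_real (2*(a-b)))) = 2 * complex_of_real (cos (2*(a-b)))"
    unfolding cos_of_real[symmetric] cos_exp_eq by simp
  have h: "(complex_of_real (sin (a - b)))^2 = (1/4) * (2 - 2 * complex_of_real (cos (2*(a-b))))"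
    unfolding cos_double_sin by (simp add: field_simps)
  have "(1/4) * ((exp (2 * \<i> * of_real a) - exp (2 * \<i> * of_real b)) * (exp (-2 * \<i> * of_real a) - exp (-2 * \<i> * of_real b)))
     = (1/4) * ((u - v) * (inverse u - inverse v))"
    unfolding eu ev u_def[symmetric] v_def[symmetric] ..
  also have "\<dots> = (1/4) * (2 - (u / v + v / u))" by (simp only: e)
  also have "\<dots> = (1/4) * (2 - 2 * complex_of_real (cos (2*(a-b))))" unfolding uv vu c ..
  finally show ?thesis using h by simp
qed

lemma exp_pow_combine:
  fixes x :: real and a b :: nat
  shows "exp (2 * \<i> * of_real x) ^ a * exp (-2 * \<i> * of_real x) ^ b = exp (2 * \<i> * of_real (x * (real a - real b)))"
proof -
  have "exp (2 * \<i> * of_real x) ^ a * exp (-2 * \<i> * of_real x) ^ b = exp (of_nat a * (2 * \<i> * of_real x)) * exp (of_nat b * (-2 * \<i> * of_real x))"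
    by (simp only: exp_of_nat_mult)
  also have "\<dots> = exp (of_nat a * (2 * \<i> * of_real x) + of_nat b * (-2 * \<i> * of_real x))"
    by (simp add: exp_diff exp_minus divide_inverse)
  also have "of_nat a * (2 * \<i> * of_real x) + of_nat b * (-2 * \<i> * of_real x) = 2 * \<i> * of_real (x * (real a - real b))"
    by (simp add: algebra_simps)
  finally show ?thesis .
qed

lemma sum_j: "2 * (\<Sum>j<m. j) + m = m * (m::nat)"
  by (induction m) (auto simp: algebra_simps)

lemma pointwise:
  fixes q :: "nat \<Rightarrow> real"
  shows "complex_of_real (\<Prod>j<m. \<Prod>k<j. (sin (q j - q k))^2) = (1/4)^(\<Sum>j<m. j) *
    (\<Sum>\<sigma>\<in>{p. p permutes {..<m}}. \<Sum>\<tau>\<in>{p. p permutes {..<m}}. of_int (sign \<sigma> * sign \<tau>) *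
       (\<Prod>j<m. exp (2 * \<i> * of_real (q j * (real (\<sigma> j) - real (\<tau> j))))))"
proof -
  define z where "z j = exp (2 * \<i> * of_real (q j))" for j
  define w where "w j = exp (-2 * \<i> * of_real (q j))" for j
  have "complex_of_real (\<Prod>j<m. \<Prod>k<j. (sin (q j - q k))^2) = (\<Prod>j<m. \<Prod>k<j. (1/4) * ((z j - z k) * (w j - w k)))"
    by (simp add: sin_sq_exp z_def w_def)
  also have "\<dots> = (\<Prod>j<m. (1/4)^j * ((\<Prod>k<j. z j - z k) * (\<Prod>k<j. w j - w k)))"
    by (simp only: prod.distrib prod_constant card_lessThan)
  also have "\<dots> = (1/4)^(\<Sum>j<m. j) * ((\<Prod>j<m. \<Prod>k<j. z j - z k) * (\<Prod>j<m. \<Prod>k<j. w j - w k))"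
    by (simp only: prod.distrib power_sum mult.assoc)
  also have "(\<Prod>j<m. \<Prod>k<j. z j - z k) * (\<Prod>j<m. \<Prod>k<j. w j - w k) =
     (\<Sum>\<sigma>\<in>{p. p permutes {..<m}}. \<Sum>\<tau>\<in>{p. p permutes {..<m}}. 
       (of_int (sign \<sigma>) * (\<Prod>j<m. z j ^ \<sigma> j)) * (of_int (sign \<tau>) * (\<Prod>j<m. w j ^ \<tau> j)))"
    unfolding vandermonde_leibniz sum_product ..
  also have "\<dots> = (\<Sum>\<sigma>\<in>{p. p permutes {..<m}}. \<Sum>\<tau>\<in>{p. p permutes {..<m}}. of_int (sign \<sigma> * sign \<tau>) *
       (\<Prod>j<m. exp (2 * \<i> * of_real (q j * (real (\<sigma> j) - real (\<tau> j))))))"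
  proof (intro sum.cong refl)
    fix \<sigma> \<tau> :: "nat \<Rightarrow> nat"
    have "(\<Prod>j<m. z j ^ \<sigma> j) * (\<Prod>j<m. w j ^ \<tau> j) = (\<Prod>j<m. exp (2 * \<i> * of_real (q j * (real (\<sigma> j) - real (\<tau> j)))))"
      by (simp only: prod.distrib[symmetric] z_def w_def exp_pow_combine)
    then show "(of_int (sign \<sigma>) * (\<Prod>j<m. z j ^ \<sigma> j)) * (of_int (sign \<tau>) * (\<Prod>j<m. w j ^ \<tau> j)) =
      of_int (sign \<sigma> * sign \<tau>) * (\<Prod>j<m. exp (2 * \<i> * of_real (q j * (real (\<sigma> j) - real (\<tau> j)))))"
      by (simp add: algebra_simps)
  qed
  finally show ?thesis .
qed



definition II :: "real \<Rightarrow> complex" where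
  "II c = (if c = 0 then 1/2 else (exp (\<i> * of_real (pi * c)) - 1) / (2 * \<i> * of_real (pi * c)))"

lemma int1d:
  "(\<integral>x. complex_of_real (indicator {0..pi/2} x) * exp (2 * \<i> * complex_of_real (c * x)) \<partial>lborel) = pi * II c"
proof -
  let ?g = "\<lambda>x::real. exp (2 * \<i> * complex_of_real (c * x))"
  have int: "integrable lborel (\<lambda>x. indicator {0..pi/2} x *\<^sub>R ?g x)"
    by (rule borel_integrable_compact) (auto intro!: continuous_intros)
  have "(\<integral>x. complex_of_real (indicator {0..pi/2} x) * ?g x \<partial>lborel) = (LINT x:{0..pi/2}|lborel. ?g x)"
    by (simp add: set_lebesgue_integral_def scaleR_conv_of_real)
  also have "\<dots> = integral {0..pi/2} ?g"
    by (rule set_borel_integral_eq_integral) (unfold set_integrable_def, rule int)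
  also have "integral {0..pi/2} ?g = pi * II c"
  proof (cases "c = 0")
    case True
    have d: "((\<lambda>x. complex_of_real x) has_vector_derivative 1) (at x within {0..pi/2})" for x
      using has_vector_derivative_real_field[of "\<lambda>z. z" 1 x "{0..pi/2}"] by (simp add: DERIV_ident)
    have "((\<lambda>_. 1::complex) has_integral (complex_of_real (pi/2) - complex_of_real 0)) {0..pi/2}"
      by (rule fundamental_theorem_of_calculus[of 0 "pi/2" "\<lambda>x. complex_of_real x"]) (auto intro: d)
    then have "integral {0..pi/2} (\<lambda>_. 1::complex) = complex_of_real (pi/2) - complex_of_real 0"
      by (rule integral_unique)
    moreover have "?g = (\<lambda>_. 1)" using True by simp
    ultimately show ?thesis using True by (simp add: II_def)
  next
    case False
    define G where "G z = exp (2 * \<i> * of_real c * z) / (2 * \<i> * of_real c)" for z :: complex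
    have d: "((\<lambda>x. G (of_real x)) has_vector_derivative ?g x) (at x within {0..pi/2})" for x
    proof -
      have "(G has_field_derivative exp (2 * \<i> * of_real c * of_real x)) (at (of_real x))"
        unfolding G_def using False by (auto intro!: derivative_eq_intros simp: field_simps)
      then have "((\<lambda>x. G (of_real x)) has_vector_derivative exp (2 * \<i> * of_real c * of_real x)) (at x within {0..pi/2})"
        by (rule has_vector_derivative_real_field)
      then show ?thesis by (simp add: mult_ac)
    qed
    have "(?g has_integral (G (of_real (pi/2)) - G (of_real 0))) {0..pi/2}"
      by (rule fundamental_theorem_of_calculus[of 0 "pi/2" "\<lambda>x. G (of_real x)"], simp, rule d)
    then have "integral {0..pi/2} ?g = G (of_real (pi/2)) - G (of_real 0)" by (rule integral_unique)
    also have "\<dots> = pi * II c"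
      using False by (simp add: G_def II_def field_simps mult_ac)
    finally show ?thesis .
  qed
  finally show ?thesis .
qed

lemma psf_lborel: "product_sigma_finite (\<lambda>_::nat. lborel :: real measure)"
  unfolding product_sigma_finite_def by (simp add: lborel.sigma_finite_measure_axioms)

lemma pim_integral:
  fixes e :: "nat \<Rightarrow> real"
  shows "complex_of_real (\<integral>p. indicator (PiE {..<m} (\<lambda>_. {0..pi/2})) p *
        (\<Prod>j\<in>{..<m}. \<Prod>k\<in>{..<j}. (sin (e j * p j - e k * p k))^2) \<partial>(PiM {..<m} (\<lambda>_. lborel)))
    = (1/4)^(\<Sum>j<m. j) * (\<Sum>\<sigma>\<in>{p. p permutes {..<m}}. \<Sum>\<tau>\<in>{p. p permutes {..<m}}.
         of_int (sign \<sigma> * sign \<tau>) * (\<Prod>j<m. pi * II (e j * (real (\<sigma> j) - real (\<tau> j)))))"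
proof -
  let ?M = "PiM {..<m} (\<lambda>_. lborel :: real measure)"
  let ?S = "{0..pi/2::real}"
  define f where "f c x = complex_of_real (indicator ?S x) * exp (2 * \<i> * of_real (c * x))" for c x :: real
  define P where "P = {p. p permutes {..<m}}"
  define cc where "cc \<sigma> \<tau> j = e j * (real (\<sigma> j) - real (\<tau> j))" for \<sigma> \<tau> :: "nat \<Rightarrow> nat" and j
  have intf: "integrable lborel (f c)" for c
  proof -
    have "integrable lborel (\<lambda>x. indicator ?S x *\<^sub>R exp (2 * \<i> * of_real (c * x)))"
      by (rule borel_integrable_compact) (auto intro!: continuous_intros)
    then show ?thesis unfolding f_def scaleR_conv_of_real .
  qed
  have intP: "integrable ?M (\<lambda>p. \<Prod>j<m. f (cc \<sigma> \<tau> j) (p j))" for \<sigma> \<tau>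
    by (rule product_sigma_finite.product_integrable_prod[OF psf_lborel]) (auto intro: intf)
  have pt: "complex_of_real (indicator (PiE {..<m} (\<lambda>_. ?S)) p * (\<Prod>j\<in>{..<m}. \<Prod>k\<in>{..<j}. (sin (e j * p j - e k * p k))^2))
     = (1/4)^(\<Sum>j<m. j) * (\<Sum>\<sigma>\<in>P. \<Sum>\<tau>\<in>P. of_int (sign \<sigma> * sign \<tau>) * (\<Prod>j<m. f (cc \<sigma> \<tau> j) (p j)))"
    if "p \<in> space ?M" for p
  proof -
    have ext: "p \<in> extensional {..<m}" using that by (simp add: space_PiM PiE_def)
    have ind: "indicator (PiE {..<m} (\<lambda>_. ?S)) p = (\<Prod>j<m. indicator ?S (p j) :: real)"
    proof (cases "\<forall>j<m. p j \<in> ?S")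
      case True
      then have "p \<in> PiE {..<m} (\<lambda>_. ?S)" using ext by (auto simp: PiE_iff)
      then show ?thesis using True by simp
    next
      case False
      then obtain j where j: "j < m" "p j \<notin> ?S" by blast
      then have "p \<notin> PiE {..<m} (\<lambda>_. ?S)" by (auto simp: PiE_iff)
      moreover have "(\<Prod>j<m. indicator ?S (p j) :: real) = 0"
      proof -
        have h: "indicator ?S (p j) = (0::real)" using j by simp
        show ?thesis by (rule prod_zero) (simp, rule bexI[of _ j], rule h, simp add: j(1))
      qed
      ultimately show ?thesis by simp
    qed
    define q where "q j = e j * p j" for j
    have "complex_of_real (indicator (PiE {..<m} (\<lambda>_. ?S)) p * (\<Prod>j\<in>{..<m}. \<Prod>k\<in>{..<j}. (sin (e j * p j - e k * p k))^2))
      = (\<Prod>j<m. complex_of_real (indicator ?S (p j))) * complex_of_real (\<Prod>j<m. \<Prod>k<j. (sin (q j - q k))^2)"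
      unfolding ind q_def by simp
    also have "\<dots> = (\<Prod>j<m. complex_of_real (indicator ?S (p j))) * ((1/4)^(\<Sum>j<m. j) *
       (\<Sum>\<sigma>\<in>P. \<Sum>\<tau>\<in>P. of_int (sign \<sigma> * sign \<tau>) *
       (\<Prod>j<m. exp (2 * \<i> * of_real (q j * (real (\<sigma> j) - real (\<tau> j)))))))"
      unfolding pointwise P_def ..
    also have "\<dots> = (1/4)^(\<Sum>j<m. j) * (\<Sum>\<sigma>\<in>P. \<Sum>\<tau>\<in>P. of_int (sign \<sigma> * sign \<tau>) *
       ((\<Prod>j<m. complex_of_real (indicator ?S (p j))) * (\<Prod>j<m. exp (2 * \<i> * of_real (q j * (real (\<sigma> j) - real (\<tau> j)))))))"
      by (simp add: sum_distrib_left mult_ac)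
    also have "\<dots> = (1/4)^(\<Sum>j<m. j) * (\<Sum>\<sigma>\<in>P. \<Sum>\<tau>\<in>P. of_int (sign \<sigma> * sign \<tau>) * (\<Prod>j<m. f (cc \<sigma> \<tau> j) (p j)))"
      unfolding prod.distrib[symmetric] f_def cc_def q_def by (simp add: mult_ac)
    finally show ?thesis .
  qed
  have "complex_of_real (\<integral>p. indicator (PiE {..<m} (\<lambda>_. ?S)) p *
        (\<Prod>j\<in>{..<m}. \<Prod>k\<in>{..<j}. (sin (e j * p j - e k * p k))^2) \<partial>?M)
    = (\<integral>p. complex_of_real (indicator (PiE {..<m} (\<lambda>_. ?S)) p *
        (\<Prod>j\<in>{..<m}. \<Prod>k\<in>{..<j}. (sin (e j * p j - e k * p k))^2)) \<partial>?M)"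
    by (rule integral_complex_of_real[symmetric])
  also have "\<dots> = (\<integral>p. (1/4)^(\<Sum>j<m. j) * (\<Sum>\<sigma>\<in>P. \<Sum>\<tau>\<in>P. of_int (sign \<sigma> * sign \<tau>) * (\<Prod>j<m. f (cc \<sigma> \<tau> j) (p j))) \<partial>?M)"
    by (rule Bochner_Integration.integral_cong[OF refl pt])
  also have "\<dots> = (1/4)^(\<Sum>j<m. j) * (\<Sum>\<sigma>\<in>P. \<Sum>\<tau>\<in>P. of_int (sign \<sigma> * sign \<tau>) * (\<integral>p. (\<Prod>j<m. f (cc \<sigma> \<tau> j) (p j)) \<partial>?M))"
    by (simp add: integral_sum integrable_sum intP)
  also have "\<dots> = (1/4)^(\<Sum>j<m. j) * (\<Sum>\<sigma>\<in>P. \<Sum>\<tau>\<in>P. of_int (sign \<sigma> * sign \<tau>) * (\<Prod>j<m. pi * II (cc \<sigma> \<tau> j)))"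
  proof -
    have i1: "integral\<^sup>L lborel (f c) = pi * II c" for c unfolding f_def by (rule int1d)
    have "(\<integral>p. (\<Prod>j<m. f (cc \<sigma> \<tau> j) (p j)) \<partial>?M) = (\<Prod>j<m. pi * II (cc \<sigma> \<tau> j))" for \<sigma> \<tau>
      by (subst product_sigma_finite.product_integral_prod[OF psf_lborel]) (auto intro: intf simp: i1)
    then show ?thesis by simp
  qed
  finally show ?thesis unfolding P_def cc_def .
qed



definition GG :: "nat \<Rightarrow> (nat \<Rightarrow> real) \<Rightarrow> complex" where
  "GG m e = (\<Sum>\<sigma>\<in>{p. p permutes {..<m}}. \<Sum>\<tau>\<in>{p. p permutes {..<m}}.
     of_int (sign \<sigma> * sign \<tau>) * (\<Prod>j<m. II (e j * (real (\<sigma> j) - real (\<tau> j)))))"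

lemma GG_cong: "(\<And>j. j < m \<Longrightarrow> e j = e' j) \<Longrightarrow> GG m e = GG m e'"
  unfolding GG_def by (intro sum.cong refl arg_cong2[where f="(*)"] prod.cong) auto

lemma GG_perm:
  assumes q: "q permutes {..<m}"
  shows "GG m (\<lambda>j. e (q j)) = GG m e"
proof -
  let ?P = "{p. p permutes {..<m}}"
  have ip: "Hilbert_Choice.inv q permutes {..<m}" using q by (rule permutes_inv)
  have "GG m e = (\<Sum>\<sigma>\<in>?P. \<Sum>\<tau>\<in>?P. of_int (sign (\<sigma> \<circ> Hilbert_Choice.inv q) * sign (\<tau> \<circ> Hilbert_Choice.inv q)) *
      (\<Prod>k<m. II (e k * (real (\<sigma> (Hilbert_Choice.inv q k)) - real (\<tau> (Hilbert_Choice.inv q k))))))"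
    unfolding GG_def
    by (subst sum_permutations_compose_right[OF ip], rule sum.cong[OF refl],
        subst sum_permutations_compose_right[OF ip], simp)
  also have "\<dots> = GG m (\<lambda>j. e (q j))"
    unfolding GG_def
  proof (intro sum.cong refl)
    fix \<sigma> \<tau> assume s: "\<sigma> \<in> ?P" and t: "\<tau> \<in> ?P"
    have pp: "permutation \<sigma>" "permutation \<tau>" "permutation (Hilbert_Choice.inv q)"
      using s t ip by (auto intro: permutes_imp_permutation)
    have sg: "sign (\<sigma> \<circ> Hilbert_Choice.inv q) * sign (\<tau> \<circ> Hilbert_Choice.inv q) = sign \<sigma> * sign \<tau>"
      using pp sign_idempotent[of "Hilbert_Choice.inv q"] by (simp add: sign_compose algebra_simps)
    have "(\<Prod>k<m. II (e k * (real (\<sigma> (Hilbert_Choice.inv q k)) - real (\<tau> (Hilbert_Choice.inv q k)))))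
        = (\<Prod>j<m. II (e (q j) * (real (\<sigma> (Hilbert_Choice.inv q (q j))) - real (\<tau> (Hilbert_Choice.inv q (q j))))))"
      by (rule prod.reindex_bij_betw[symmetric]) (rule permutes_imp_bij[OF q])
    also have "\<dots> = (\<Prod>j<m. II (e (q j) * (real (\<sigma> j) - real (\<tau> j))))"
      by (simp add: permutes_inverses(2)[OF q])
    finally show "of_int (sign (\<sigma> \<circ> Hilbert_Choice.inv q) * sign (\<tau> \<circ> Hilbert_Choice.inv q)) *
      (\<Prod>k<m. II (e k * (real (\<sigma> (Hilbert_Choice.inv q k)) - real (\<tau> (Hilbert_Choice.inv q k))))) =
      of_int (sign \<sigma> * sign \<tau>) * (\<Prod>j<m. II (e (q j) * (real (\<sigma> j) - real (\<tau> j))))"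
      using sg by simp
  qed
  finally show ?thesis by simp
qed

lemma exists_perm:
  assumes S: "S \<subseteq> {..<m}" and c: "card S = s"
  shows "\<exists>q. q permutes {..<m} \<and> (\<forall>j<m. j \<in> S \<longleftrightarrow> q j < s)"
proof -
  have fS: "finite S" using S finite_subset by blast
  have sm: "s \<le> m" using card_mono[OF _ S] c by simp
  obtain f where f: "bij_betw f S {..<s}" using finite_same_card_bij[OF fS, of "{..<s}"] c by auto
  have "card ({..<m} - S) = card {s..<m}" using S c fS sm by (simp add: card_Diff_subset)
  then obtain g where g: "bij_betw g ({..<m} - S) {s..<m}" using finite_same_card_bij[of "{..<m} - S" "{s..<m}"] by auto
  define q where "q j = (if j \<in> S then f j else if j < m then g j else j)" for j
  have b1: "bij_betw q S {..<s}" using f by (rule bij_betw_cong[THEN iffD1, rotated]) (simp add: q_def)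
  have b2: "bij_betw q ({..<m} - S) {s..<m}" using g by (rule bij_betw_cong[THEN iffD1, rotated]) (simp add: q_def)
  have "bij_betw q (S \<union> ({..<m} - S)) ({..<s} \<union> {s..<m})"
    by (rule bij_betw_combine[OF b1 b2]) auto
  moreover have "S \<union> ({..<m} - S) = {..<m}" using S by auto
  moreover have "{..<s} \<union> {s..<m} = {..<m}" using sm by auto
  ultimately have "bij_betw q {..<m} {..<m}" by simp
  then have "q permutes {..<m}" by (rule bij_imp_permutes) (simp add: q_def, use S in auto)
  moreover have "\<forall>j<m. j \<in> S \<longleftrightarrow> q j < s"
  proof (intro allI impI)
    fix j assume j: "j < m"
    show "j \<in> S \<longleftrightarrow> q j < s"
    proof (cases "j \<in> S")
      case True then show ?thesis using bij_betwE[OF f] by (auto simp: q_def)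
    next
      case False then have "g j \<in> {s..<m}" using bij_betwE[OF g] j by auto
      then show ?thesis using False j by (auto simp: q_def)
    qed
  qed
  ultimately show ?thesis by blast
qed

definition eS :: "nat set \<Rightarrow> nat \<Rightarrow> real" where
  "eS S j = (if j \<in> S then -1 else 1)"

lemma GG_subset:
  assumes S: "S \<subseteq> {..<m}" and c: "card S = s"
  shows "GG m (eS S) = GG m (eps s)"
proof -
  obtain q where q: "q permutes {..<m}" and h: "\<forall>j<m. j \<in> S \<longleftrightarrow> q j < s"
    using exists_perm[OF S c] by blast
  have "GG m (eS S) = GG m (\<lambda>j. eps s (q j))"
    by (rule GG_cong) (use h in \<open>auto simp: eS_def eps_def\<close>)
  also have "\<dots> = GG m (eps s)" by (rule GG_perm[OF q])
  finally show ?thesis .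
qed



lemma F_eq: "complex_of_real (F m s) = GG m (eps s) / (fact s * fact (m - s))"
proof -
  define N where "N = (\<Sum>j<m. j)"
  have I: "complex_of_real (\<integral>p. indicator (PiE {..<m} (\<lambda>_. {0..pi/2})) p *
        (\<Prod>j\<in>{..<m}. \<Prod>k\<in>{..<j}. (sin (eps s j * p j - eps s k * p k))^2) \<partial>(PiM {..<m} (\<lambda>_. lborel)))
     = (1/4)^N * (of_real pi ^ m * GG m (eps s))"
    unfolding pim_integral N_def GG_def
    by (simp add: prod.distrib sum_distrib_left mult_ac)
  have h: "m^2 = 2 * N + m" using sum_j[of m] unfolding N_def by (simp add: power2_eq_square)
  have eq: "real (m^2) - real m = real (2 * N)" unfolding h by simp
  have P: "2 powr (real (m^2) - real m) = 4 ^ N"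
  proof -
    have "(2::real) powr real (2*N) = 2^(2*N)" by (rule powr_realpow) simp
    also have "\<dots> = 4^N" by (simp add: power_mult)
    finally show ?thesis unfolding eq .
  qed
  have "complex_of_real (F m s) = complex_of_real (2 powr (real (m^2) - real m)) / (of_real pi ^ m * fact s * fact (m - s)) *
     complex_of_real (\<integral>p. indicator (PiE {..<m} (\<lambda>_. {0..pi/2})) p *
        (\<Prod>j\<in>{..<m}. \<Prod>k\<in>{..<j}. (sin (eps s j * p j - eps s k * p k))^2) \<partial>(PiM {..<m} (\<lambda>_. lborel)))"
    unfolding F_def by simp
  also have "\<dots> = 4 ^ N / (of_real pi ^ m * fact s * fact (m - s)) * ((1/4)^N * (of_real pi ^ m * GG m (eps s)))"
    unfolding I P by simp
  also have "\<dots> = (4 ^ N * (1/4)^N) * GG m (eps s) / (fact s * fact (m - s))"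
    by (simp add: field_simps)
  also have "(4 ^ N * (1/4)^N :: complex) = 1" by (simp add: power_mult_distrib[symmetric])
  finally show ?thesis by simp
qed

lemma sum_group_card:
  "(\<Sum>s\<in>{0..m}. complex_of_real (exp (real s * \<beta>)) * GG m (eps s) / (fact s * fact (m - s)))
   = (\<Sum>S\<in>Pow {..<m}. complex_of_real (exp (real (card S) * \<beta>)) * GG m (eS S)) / fact m"
proof -
  have "(\<Sum>S\<in>Pow {..<m}. complex_of_real (exp (real (card S) * \<beta>)) * GG m (eS S))
     = (\<Sum>s\<in>{0..m}. \<Sum>S\<in>{S \<in> Pow {..<m}. card S = s}. complex_of_real (exp (real (card S) * \<beta>)) * GG m (eS S))"
    by (rule sum.group[symmetric]) (auto simp: card_mono[of "{..<m}", simplified] intro: card_mono[of "{..<m}", simplified])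
  also have "\<dots> = (\<Sum>s\<in>{0..m}. of_nat (m choose s) * (complex_of_real (exp (real s * \<beta>)) * GG m (eps s)))"
  proof (rule sum.cong[OF refl])
    fix s assume "s \<in> {0..m}"
    have "(\<Sum>S\<in>{S \<in> Pow {..<m}. card S = s}. complex_of_real (exp (real (card S) * \<beta>)) * GG m (eS S))
        = (\<Sum>S\<in>{S \<in> Pow {..<m}. card S = s}. complex_of_real (exp (real s * \<beta>)) * GG m (eps s))"
      by (rule sum.cong[OF refl]) (auto simp: GG_subset)
    also have "\<dots> = of_nat (card {S \<in> Pow {..<m}. card S = s}) * (complex_of_real (exp (real s * \<beta>)) * GG m (eps s))"
      by simp
    also have "{S \<in> Pow {..<m}. card S = s} = {S. S \<subseteq> {..<m} \<and> card S = s}" by auto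
    also have "card {S. S \<subseteq> {..<m} \<and> card S = s} = m choose s" by (simp add: n_subsets)
    finally show "(\<Sum>S\<in>{S \<in> Pow {..<m}. card S = s}. complex_of_real (exp (real (card S) * \<beta>)) * GG m (eS S))
        = of_nat (m choose s) * (complex_of_real (exp (real s * \<beta>)) * GG m (eps s))" by simp
  qed
  finally have 1: "(\<Sum>S\<in>Pow {..<m}. complex_of_real (exp (real (card S) * \<beta>)) * GG m (eS S)) / fact m
     = (\<Sum>s\<in>{0..m}. of_nat (m choose s) / fact m * (complex_of_real (exp (real s * \<beta>)) * GG m (eps s)))"
    by (simp add: sum_divide_distrib)
  have 2: "of_nat (m choose s) / fact m = (1 / (fact s * fact (m - s)) :: complex)" if "s \<in> {0..m}" for s
    using that by (simp add: binomial_fact)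
  show ?thesis unfolding 1 by (rule sum.cong[OF refl]) (simp add: 2)
qed

lemma expand_subsets:
  "(\<Sum>S\<in>Pow {..<m}. complex_of_real (exp (real (card S) * \<beta>)) * GG m (eS S))
   = (\<Sum>\<sigma>\<in>{p. p permutes {..<m}}. \<Sum>\<tau>\<in>{p. p permutes {..<m}}. of_int (sign \<sigma> * sign \<tau>) *
       (\<Prod>j<m. II (real (\<sigma> j) - real (\<tau> j)) + complex_of_real (exp \<beta>) * II (- (real (\<sigma> j) - real (\<tau> j)))))"
proof -
  let ?P = "{p. p permutes {..<m}}"
  have "(\<Sum>S\<in>Pow {..<m}. complex_of_real (exp (real (card S) * \<beta>)) * GG m (eS S))
    = (\<Sum>S\<in>Pow {..<m}. \<Sum>\<sigma>\<in>?P. \<Sum>\<tau>\<in>?P. complex_of_real (exp (real (card S) * \<beta>)) * (of_int (sign \<sigma> * sign \<tau>) * (\<Prod>j<m. II (eS S j * (real (\<sigma> j) - real (\<tau> j))))))"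
    unfolding GG_def by (simp add: sum_distrib_left)
  also have "\<dots> = (\<Sum>\<sigma>\<in>?P. \<Sum>\<tau>\<in>?P. \<Sum>S\<in>Pow {..<m}. complex_of_real (exp (real (card S) * \<beta>)) * (of_int (sign \<sigma> * sign \<tau>) * (\<Prod>j<m. II (eS S j * (real (\<sigma> j) - real (\<tau> j))))))"
    by (subst sum.swap, rule sum.cong[OF refl], rule sum.swap)
  also have "\<dots> = (\<Sum>\<sigma>\<in>?P. \<Sum>\<tau>\<in>?P. of_int (sign \<sigma> * sign \<tau>) *
       (\<Prod>j<m. II (real (\<sigma> j) - real (\<tau> j)) + complex_of_real (exp \<beta>) * II (- (real (\<sigma> j) - real (\<tau> j)))))"
  proof (intro sum.cong refl)
    fix \<sigma> \<tau> :: "nat \<Rightarrow> nat"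
    define x where "x j = real (\<sigma> j) - real (\<tau> j)" for j
    define E where "E = complex_of_real (exp \<beta>)"
    have "(\<Prod>j<m. II (x j) + E * II (- x j)) = (\<Prod>j<m. E * II (- x j) + II (x j))"
      by (simp add: add.commute)
    also have "\<dots> = (\<Sum>X\<in>Pow {..<m}. (\<Prod>j\<in>X. E * II (- x j)) * (\<Prod>j\<in>{..<m} - X. II (x j)))"
      by (rule prod_add) simp
    also have "\<dots> = (\<Sum>X\<in>Pow {..<m}. complex_of_real (exp (real (card X) * \<beta>)) * (\<Prod>j<m. II (eS X j * x j)))"
    proof (rule sum.cong[OF refl])
      fix X assume X: "X \<in> Pow {..<m}"
      have "(\<Prod>j<m. II (eS X j * x j)) = (\<Prod>j\<in>{..<m} - X. II (eS X j * x j)) * (\<Prod>j\<in>X. II (eS X j * x j))"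
        using X by (intro prod.subset_diff) auto
      also have "\<dots> = (\<Prod>j\<in>{..<m} - X. II (x j)) * (\<Prod>j\<in>X. II (- x j))"
        by (intro arg_cong2[where f="(*)"] prod.cong) (auto simp: eS_def)
      finally have a: "(\<Prod>j<m. II (eS X j * x j)) = (\<Prod>j\<in>{..<m} - X. II (x j)) * (\<Prod>j\<in>X. II (- x j))" .
      have b: "(\<Prod>j\<in>X. E * II (- x j)) = E ^ card X * (\<Prod>j\<in>X. II (- x j))"
        by (simp add: prod.distrib)
      have c: "complex_of_real (exp (real (card X) * \<beta>)) = E ^ card X"
        unfolding E_def by (simp add: exp_of_nat_mult)
      show "(\<Prod>j\<in>X. E * II (- x j)) * (\<Prod>j\<in>{..<m} - X. II (x j)) =
          complex_of_real (exp (real (card X) * \<beta>)) * (\<Prod>j<m. II (eS X j * x j))"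
        unfolding a b c by (simp add: mult_ac)
    qed
    finally have "(\<Prod>j<m. II (x j) + E * II (- x j)) = (\<Sum>X\<in>Pow {..<m}. complex_of_real (exp (real (card X) * \<beta>)) * (\<Prod>j<m. II (eS X j * x j)))" .
    then show "(\<Sum>S\<in>Pow {..<m}. complex_of_real (exp (real (card S) * \<beta>)) * (of_int (sign \<sigma> * sign \<tau>) * (\<Prod>j<m. II (eS S j * (real (\<sigma> j) - real (\<tau> j))))))
      = of_int (sign \<sigma> * sign \<tau>) * (\<Prod>j<m. II (real (\<sigma> j) - real (\<tau> j)) + complex_of_real (exp \<beta>) * II (- (real (\<sigma> j) - real (\<tau> j))))"
      unfolding x_def E_def by (simp add: sum_distrib_left mult_ac)
  qed
  finally show ?thesis .
qed

lemma double_perm_sum: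
  fixes b :: "real \<Rightarrow> complex"
  shows "(\<Sum>\<sigma>\<in>{p. p permutes {..<m}}. \<Sum>\<tau>\<in>{p. p permutes {..<m}}. of_int (sign \<sigma> * sign \<tau>) * (\<Prod>j<m. b (real (\<sigma> j) - real (\<tau> j))))
    = fact m * (\<Sum>\<rho>\<in>{p. p permutes {..<m}}. of_int (sign \<rho>) * (\<Prod>k<m. b (real k - real (\<rho> k))))"
proof -
  let ?P = "{p. p permutes {..<m}}"
  let ?D = "(\<Sum>\<rho>\<in>?P. of_int (sign \<rho>) * (\<Prod>k<m. b (real k - real (\<rho> k))))"
  have inner: "(\<Sum>\<tau>\<in>?P. of_int (sign \<sigma> * sign \<tau>) * (\<Prod>j<m. b (real (\<sigma> j) - real (\<tau> j)))) = ?D"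
    if s: "\<sigma> \<in> ?P" for \<sigma>
  proof -
    have sp: "\<sigma> permutes {..<m}" using s by simp
    have "(\<Sum>\<tau>\<in>?P. of_int (sign \<sigma> * sign \<tau>) * (\<Prod>j<m. b (real (\<sigma> j) - real (\<tau> j))))
      = (\<Sum>\<rho>\<in>?P. of_int (sign \<sigma> * sign (\<rho> \<circ> \<sigma>)) * (\<Prod>j<m. b (real (\<sigma> j) - real ((\<rho> \<circ> \<sigma>) j))))"
      by (rule sum_permutations_compose_right[OF sp])
    also have "\<dots> = ?D"
    proof (rule sum.cong[OF refl])
      fix \<rho> assume r: "\<rho> \<in> ?P"
      have pr: "permutation \<rho>" using r by (auto intro: permutes_imp_permutation[OF finite_lessThan])
      have ps: "permutation \<sigma>" using sp by (auto intro: permutes_imp_permutation[OF finite_lessThan])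
      have "sign \<sigma> * sign (\<rho> \<circ> \<sigma>) = sign \<rho> * (sign \<sigma> * sign \<sigma>)"
        by (simp add: sign_compose[OF pr ps] mult_ac)
      then have sg: "sign \<sigma> * sign (\<rho> \<circ> \<sigma>) = sign \<rho>" using sign_idempotent[of \<sigma>] by simp
      have pr: "(\<Prod>j<m. b (real (\<sigma> j) - real (\<rho> (\<sigma> j)))) = (\<Prod>k<m. b (real k - real (\<rho> k)))"
        by (rule prod.reindex_bij_betw[OF permutes_imp_bij[OF sp], of "\<lambda>k. b (real k - real (\<rho> k))"])
      show "of_int (sign \<sigma> * sign (\<rho> \<circ> \<sigma>)) * (\<Prod>j<m. b (real (\<sigma> j) - real ((\<rho> \<circ> \<sigma>) j)))
          = of_int (sign \<rho>) * (\<Prod>k<m. b (real k - real (\<rho> k)))"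
        using sg pr by simp
    qed
    finally show ?thesis .
  qed
  have "(\<Sum>\<sigma>\<in>?P. \<Sum>\<tau>\<in>?P. of_int (sign \<sigma> * sign \<tau>) * (\<Prod>j<m. b (real (\<sigma> j) - real (\<tau> j)))) = (\<Sum>\<sigma>\<in>?P. ?D)"
    by (rule sum.cong[OF refl]) (rule inner)
  also have "\<dots> = of_nat (card ?P) * ?D" by simp
  also have "card ?P = fact m" by (rule card_permutations) auto
  finally show ?thesis by simp
qed

lemma exp_ipi_nat: "exp (\<i> * complex_of_real (pi * (real k - real n))) = (if even k = even n then 1 else -1)"
proof -
  have "\<i> * complex_of_real (pi * (real k - real n)) = of_nat k * (\<i> * of_real pi) - of_nat n * (\<i> * of_real pi)"
    by (simp add: algebra_simps)
  then have "exp (\<i> * complex_of_real (pi * (real k - real n))) = exp (\<i> * of_real pi) ^ k / exp (\<i> * of_real pi) ^ n"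
    by (simp only: exp_diff exp_of_nat_mult)
  also have "\<dots> = (-1) ^ k / (-1) ^ n" by (simp only: exp_pi_i')
  finally show ?thesis by (cases "even k"; cases "even n") simp_all
qed

lemma powi_nat: "(-1::real) powi (int n - int k) = (if even k = even n then 1 else -1)"
proof -
  have "(-1::real) powi (int n - int k) = (-1) ^ n / (-1) ^ k"
    by (simp add: power_int_diff power_int_of_nat)
  then show ?thesis by (cases "even k"; cases "even n") simp_all
qed

lemma alg:
  fixes X P :: complex and u E :: real
  assumes "X \<noteq> 0" "P \<noteq> 0"
  shows "complex_of_real ((1 - E) * (1 - u)) / (2 * \<i> * P * - X)
    = (of_real u - 1) / (2 * \<i> * (P * X)) + of_real E * ((of_real u - 1) / (2 * \<i> * (P * - X)))"
  using assms by (simp add: field_simps)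

lemma Tentry:
  assumes "k < m" "n < m"
  shows "Tmat m \<beta> $$ (k,n) = II (real k - real n) + complex_of_real (exp \<beta>) * II (- (real k - real n))"
proof (cases "k = n")
  case True
  then show ?thesis using assms by (simp add: Tmat_def II_def field_simps)
next
  case False
  define u :: real where "u = (if even k = even n then 1 else -1)"
  have x0: "real k - real n \<noteq> 0" using False by simp
  have e1: "exp (\<i> * complex_of_real (pi * (real k - real n))) = of_real u"
    unfolding exp_ipi_nat u_def by simp
  have e2: "exp (\<i> * complex_of_real (pi * (- (real k - real n)))) = of_real u"
    using exp_ipi_nat[of n k] unfolding u_def by (auto simp: minus_diff_eq)
  have pw: "(-1::real) powi (int n - int k) = u" unfolding powi_nat u_def ..
  have oi: "(of_int (int n - int k) :: complex) = - complex_of_real (real k - real n)" by simp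
  have x0': "- (real k - real n) \<noteq> 0" using x0 by simp
  have m1: "complex_of_real (pi * (real k - real n)) = of_real pi * of_real (real k - real n)" by simp
  have m2: "complex_of_real (pi * - (real k - real n)) = of_real pi * - of_real (real k - real n)" by simp
  show ?thesis
    using assms False x0
    unfolding Tmat_def II_def
    apply (simp only: index_mat split if_False e1 e2 pw oi x0 x0')
    apply (simp only: m1 m2)
    apply (rule alg)
    apply (simp_all add: x0)
    done
qed



theorem mainTheorem7:
  fixes m :: nat and \<beta> :: real
  assumes "m \<ge> 1"
  shows "complex_of_real (\<Sum>s\<in>{0..m}. exp (real s * \<beta>) * F m s) = Determinant.det (Tmat m \<beta>)"
proof -
  define b where "b x = II x + complex_of_real (exp \<beta>) * II (- x)" for x
  have "complex_of_real (\<Sum>s\<in>{0..m}. exp (real s * \<beta>) * F m s)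
     = (\<Sum>s\<in>{0..m}. complex_of_real (exp (real s * \<beta>)) * GG m (eps s) / (fact s * fact (m - s)))"
    by (simp add: F_eq)
  also have "\<dots> = (\<Sum>S\<in>Pow {..<m}. complex_of_real (exp (real (card S) * \<beta>)) * GG m (eS S)) / fact m"
    by (rule sum_group_card)
  also have "\<dots> = (\<Sum>\<sigma>\<in>{p. p permutes {..<m}}. \<Sum>\<tau>\<in>{p. p permutes {..<m}}. of_int (sign \<sigma> * sign \<tau>) *
       (\<Prod>j<m. b (real (\<sigma> j) - real (\<tau> j)))) / fact m"
    unfolding expand_subsets b_def ..
  also have "\<dots> = (\<Sum>\<rho>\<in>{p. p permutes {..<m}}. of_int (sign \<rho>) * (\<Prod>k<m. b (real k - real (\<rho> k))))"
    unfolding double_perm_sum by simp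
  also have "\<dots> = Determinant.det (Tmat m \<beta>)"
  proof -
    have c: "Tmat m \<beta> \<in> carrier_mat m m" by (simp add: Tmat_def)
    show ?thesis
      unfolding det_def'[OF c] atLeast0LessThan
    proof (rule sum.cong[OF refl])
      fix \<rho> assume r: "\<rho> \<in> {p. p permutes {..<m}}"
      have "(\<Prod>k<m. b (real k - real (\<rho> k))) = (\<Prod>i<m. Tmat m \<beta> $$ (i, \<rho> i))"
      proof (rule prod.cong[OF refl])
        fix i assume i: "i \<in> {..<m}"
        then have "\<rho> i < m" using r permutes_in_image[of \<rho> "{..<m}" i] by simp
        then show "b (real i - real (\<rho> i)) = Tmat m \<beta> $$ (i, \<rho> i)"
          using i by (simp add: Tentry b_def)
      qed
      then show "of_int (sign \<rho>) * (\<Prod>k<m. b (real k - real (\<rho> k))) = signof \<rho> * (\<Prod>i<m. Tmat m \<beta> $$ (i, \<rho> i))"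
        by simp
    qed
  qed
  finally show ?thesis .
qed


end
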